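(* Let $n\ge2$, let $A=[a_{kl}]$ be a real $n\times n$ matrix with zero diagonal and $f(\sigma)=\sum_{p=1}^{n-1}\sum_{q=p+1}^n a_{\sigma(p)\sigma(q)}$ its LOP objective function on $\Sigma_n$. For all $i,j\in\{1,\dots,n\}$, $$\frac{1}{(n-1)!}\sum_{\sigma:\sigma(i)=j}f(\sigma)=\frac{i-1}{n-1}\sum_{k\ne j}a_{kj}+\frac{n-i}{n-1}\sum_{k\ne j}a_{jk}+\frac12\sum_{\substack{k\ne l\\ k,l\ne j}}a_{kl}.$$
   Context: $\Sigma_n$ is the symmetric group on $\{1,\dots,n\}$; $\sigma(p)$ is the row/column index placed in position $p$, so $\sigma(i)=j$ means index $j$ is in position $i$. *)

theory Defs
  imports "HOL-Combinatorics.Permutations" Complex_Main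
begin

definition lop_obj :: "nat \<Rightarrow> (nat \<Rightarrow> nat \<Rightarrow> real) \<Rightarrow> (nat \<Rightarrow> nat) \<Rightarrow> real" where
  "lop_obj n a \<sigma> = (\<Sum>p = 1..n - 1. \<Sum>q = p + 1..n. a (\<sigma> p) (\<sigma> q))"

end

theory Submission
  imports Defs
begin

lemma card_perm_fix:
  assumes "finite A" "distinct xs" "distinct ys" "set xs \<subseteq> A" "set ys \<subseteq> A" "length xs = length ys"
  shows "card {\<sigma>. \<sigma> permutes A \<and> map \<sigma> xs = ys} = fact (card A - length xs)"
  using assms
proof (induction xs arbitrary: A ys)
  case Nil
  then show ?case by (simp add: card_permutations)
next
  case (Cons x xs)
  then obtain y ys' where ys: "ys = y # ys'" by (cases ys) auto
  define t where "t = Transposition.transpose x y"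
  have xA: "x \<in> A" and yA: "y \<in> A" using Cons.prems ys by auto
  have tt: "\<And>z. t (t z) = z" unfolding t_def by simp
  have eq: "{\<sigma>. \<sigma> permutes A \<and> map \<sigma> (x#xs) = ys} =
     (\<lambda>\<tau>. t \<circ> \<tau>) ` {\<tau>. \<tau> permutes (A - {x}) \<and> map \<tau> xs = map t ys'}"
  proof (intro set_eqI iffI)
    fix \<sigma> assume "\<sigma> \<in> {\<sigma>. \<sigma> permutes A \<and> map \<sigma> (x#xs) = ys}"
    then have s: "\<sigma> permutes A" "\<sigma> x = y" "map \<sigma> xs = ys'" using ys by auto
    have p: "t \<circ> \<sigma> permutes A" unfolding t_def
      by (intro permutes_compose s permutes_swap_id xA yA)
    have "t \<circ> \<sigma> permutes (A - {x})"
      by (rule permutes_superset[OF p]) (auto simp: s t_def)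
    moreover have "map (t \<circ> \<sigma>) xs = map t ys'" using s(3) by (metis list.map_comp)
    moreover have "\<sigma> = t \<circ> (t \<circ> \<sigma>)" by (simp add: fun_eq_iff tt)
    ultimately show "\<sigma> \<in> (\<lambda>\<tau>. t \<circ> \<tau>) ` {\<tau>. \<tau> permutes (A - {x}) \<and> map \<tau> xs = map t ys'}"
      by blast
  next
    fix \<sigma> assume "\<sigma> \<in> (\<lambda>\<tau>. t \<circ> \<tau>) ` {\<tau>. \<tau> permutes (A - {x}) \<and> map \<tau> xs = map t ys'}"
    then obtain \<tau> where s: "\<sigma> = t \<circ> \<tau>" "\<tau> permutes (A - {x})" "map \<tau> xs = map t ys'" by auto
    have "\<tau> permutes A" using s(2) by (rule permutes_subset) auto
    then have "\<sigma> permutes A" unfolding s(1) t_def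
      by (intro permutes_compose permutes_swap_id xA yA)
    moreover have "\<tau> x = x" using s(2) by (simp add: permutes_not_in)
    moreover have "map \<sigma> xs = ys'"
    proof -
      have "map \<sigma> xs = map t (map \<tau> xs)" using s(1) by simp
      also have "\<dots> = map t (map t ys')" using s(3) by simp
      also have "\<dots> = ys'" by (induction ys') (simp_all add: tt)
      finally show ?thesis .
    qed
    ultimately show "\<sigma> \<in> {\<sigma>. \<sigma> permutes A \<and> map \<sigma> (x#xs) = ys}"
      using ys s(1) by (simp add: t_def)
  qed
  have inj: "inj_on (\<lambda>\<tau>. t \<circ> \<tau>) X" for X
    by (rule inj_onI) (metis comp_assoc fun.map_comp fun_eq_iff tt comp_apply)
  have ih: "card {\<tau>. \<tau> permutes (A - {x}) \<and> map \<tau> xs = map t ys'} = fact (card (A - {x}) - length xs)"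
  proof (rule Cons.IH)
    show "finite (A - {x})" using Cons.prems by auto
    show "distinct xs" using Cons.prems by auto
    show "distinct (map t ys')" using Cons.prems ys
      by (simp add: distinct_map t_def)
    show "set xs \<subseteq> A - {x}" using Cons.prems by auto
    show "set (map t ys') \<subseteq> A - {x}" using Cons.prems ys
      by (auto simp: t_def Transposition.transpose_def)
    show "length xs = length (map t ys')" using Cons.prems ys by simp
  qed
  show ?case unfolding eq using ih xA Cons.prems(1)
    by (simp add: card_image[OF inj] card_Diff_singleton)
qed

lemma fiber_sum:
  fixes g :: "'b \<Rightarrow> real"
  assumes "finite S" "finite X" "h ` S \<subseteq> X" "\<And>x. x \<in> X \<Longrightarrow> card {\<sigma>\<in>S. h \<sigma> = x} = c"
  shows "(\<Sum>\<sigma>\<in>S. g (h \<sigma>)) = real c * (\<Sum>x\<in>X. g x)"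
proof -
  have "(\<Sum>\<sigma>\<in>S. g (h \<sigma>)) = (\<Sum>x\<in>X. \<Sum>\<sigma>\<in>{\<sigma>\<in>S. h \<sigma> = x}. g (h \<sigma>))"
    by (rule sum.group[symmetric]) (use assms in auto)
  also have "\<dots> = (\<Sum>x\<in>X. real c * g x)"
  proof (rule sum.cong)
    fix x assume x: "x \<in> X"
    have "(\<Sum>\<sigma>\<in>{\<sigma>\<in>S. h \<sigma> = x}. g (h \<sigma>)) = (\<Sum>\<sigma>\<in>{\<sigma>\<in>S. h \<sigma> = x}. g x)"
      by (rule sum.cong) auto
    also have "\<dots> = real c * g x" using assms(4)[OF x] by simp
    finally show "(\<Sum>\<sigma>\<in>{\<sigma>\<in>S. h \<sigma> = x}. g (h \<sigma>)) = real c * g x" .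
  qed simp
  finally show ?thesis by (simp add: sum_distrib_left)
qed

lemma count_a:
  fixes n :: nat
  shows "(\<Sum>p = 1..n - 1. \<Sum>q = p + 1..n. (1::real)) = real n * (real n - 1) / 2"
proof (induction n)
  case 0 then show ?case by simp
next
  case (Suc n)
  show ?case
  proof (cases n)
    case 0 then show ?thesis by simp
  next
    case (Suc m)
    have "(\<Sum>p = 1..Suc n - 1. \<Sum>q = p + 1..Suc n. (1::real)) = (\<Sum>p = 1..n. real (Suc n - p))"
      by simp
    also have "\<dots> = (\<Sum>p = 1..n - 1. real (Suc n - p)) + 1"
      using Suc by (simp add: sum.cl_ivl_Suc)
    also have "(\<Sum>p = 1..n - 1. real (Suc n - p)) = (\<Sum>p = 1..n - 1. real (n - p) + 1)"
      by (rule sum.cong) auto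
    also have "\<dots> = (\<Sum>p = 1..n - 1. \<Sum>q = p + 1..n. (1::real)) + real (n - 1)"
      by (simp add: sum.distrib)
    finally show ?thesis using Suc.IH Suc by (simp add: field_simps)
  qed
qed

lemma count_b:
  fixes n i :: nat
  shows "(\<Sum>p = 1..n - 1. \<Sum>q = p + 1..n. (if p = i then 1 else 0::real)) = (if 1 \<le> i then real (n - i) else 0)"
proof -
  have "(\<Sum>p = 1..n - 1. \<Sum>q = p + 1..n. (if p = i then 1 else 0::real)) = (\<Sum>p = 1..n - 1. (if p = i then real (n - p) else 0))"
    by (rule sum.cong) auto
  also have "\<dots> = (if 1 \<le> i then real (n - i) else 0)" by auto
  finally show ?thesis .
qed

lemma count_c:
  fixes n i :: nat
  assumes "i \<le> n"
  shows "(\<Sum>p = 1..n - 1. \<Sum>q = p + 1..n. (if q = i then 1 else 0::real)) = real (i - 1)"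
proof -
  have "(\<Sum>p = 1..n - 1. \<Sum>q = p + 1..n. (if q = i then 1 else 0::real)) = (\<Sum>p = 1..n - 1. (if p < i then 1 else 0))"
    by (rule sum.cong) (use assms in auto)
  also have "\<dots> = real (card {p\<in>{1..n-1}. p < i})"
    by (simp add: sum.If_cases) (intro arg_cong[where f=card]; auto)
  also have "{p\<in>{1..n-1}. p < i} = {1..i-1}" using assms by auto
  finally show ?thesis by simp
qed


lemma final_alg:
  fixes F2 m R C D I :: real
  assumes "m > 0" "F2 > 0"
  shows "1 / (m * F2) * (F2 * R * (m + 1 - I) + F2 * C * (I - 1) + m / 2 * (F2 * D))
    = (I - 1) / m * C + (m + 1 - I) / m * R + 1 / 2 * D"
  using assms by (simp add: field_simps)

theorem proposition8:
  fixes n :: nat and a :: "nat \<Rightarrow> nat \<Rightarrow> real" and i j :: nat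
  assumes "n \<ge> 2"
    and "\<forall>k\<in>{1..n}. a k k = 0"
    and "i \<in> {1..n}" and "j \<in> {1..n}"
  shows "(1 / fact (n - 1)) * (\<Sum>\<sigma>\<in>{\<sigma>. \<sigma> permutes {1..n} \<and> \<sigma> i = j}. lop_obj n a \<sigma>)
       = (real (i - 1) / real (n - 1)) * (\<Sum>k\<in>{1..n} - {j}. a k j)
       + (real (n - i) / real (n - 1)) * (\<Sum>k\<in>{1..n} - {j}. a j k)
       + (1 / 2) * (\<Sum>k\<in>{1..n} - {j}. \<Sum>l\<in>{1..n} - {j, k}. a k l)"
proof -
  define A where "A = {1..n}"
  define S where "S = {\<sigma>. \<sigma> permutes A \<and> \<sigma> i = j}"
  define R where "R = (\<Sum>k\<in>A - {j}. a j k)"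
  define C where "C = (\<Sum>k\<in>A - {j}. a k j)"
  define D where "D = (\<Sum>k\<in>A - {j}. \<Sum>l\<in>A - {j, k}. a k l)"
  define F2 :: real where "F2 = fact (n - 2)"
  define F3 :: real where "F3 = fact (n - 3)"
  have finA: "finite A" and cardA: "card A = n" and iA: "i \<in> A" and jA: "j \<in> A"
    using assms by (auto simp: A_def)
  have finS: "finite S"
    by (rule finite_subset[OF _ finite_permutations[OF finA]]) (auto simp: S_def)
  have permS: "\<sigma> permutes A" "\<sigma> i = j" if "\<sigma> \<in> S" for \<sigma> using that by (auto simp: S_def)
  have imgS: "\<sigma> q \<in> A" if "\<sigma> \<in> S" "q \<in> A" for \<sigma> q
    using permS(1)[OF that(1)] that(2) by (simp add: permutes_in_image)
  have neqS: "\<sigma> q \<noteq> \<sigma> p" if "\<sigma> \<in> S" "q \<noteq> p" for \<sigma> p q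
    using permS(1)[OF that(1)] that(2) by (metis permutes_inj injD)
  have T1: "(\<Sum>\<sigma>\<in>S. a (\<sigma> i) (\<sigma> q)) = F2 * R" if q: "q \<in> A" "q \<noteq> i" for q
  proof -
    have "(\<Sum>\<sigma>\<in>S. a (\<sigma> i) (\<sigma> q)) = (\<Sum>\<sigma>\<in>S. a j (\<sigma> q))"
      by (rule sum.cong) (auto simp: permS)
    also have "\<dots> = real (fact (n - 2)) * (\<Sum>l\<in>A - {j}. a j l)"
    proof (rule fiber_sum[OF finS])
      show "finite (A - {j})" using finA by simp
      show "(\<lambda>\<sigma>. \<sigma> q) ` S \<subseteq> A - {j}" 
      proof (rule image_subsetI)
        fix \<sigma> assume s: "\<sigma> \<in> S"
        show "\<sigma> q \<in> A - {j}" using imgS[OF s q(1)] neqS[OF s q(2)] permS(2)[OF s] by auto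
      qed
      fix l assume l: "l \<in> A - {j}"
      have "{\<sigma>\<in>S. \<sigma> q = l} = {\<sigma>. \<sigma> permutes A \<and> map \<sigma> [i, q] = [j, l]}"
        by (auto simp: S_def)
      also have "card \<dots> = fact (card A - length [i, q])"
        by (rule card_perm_fix) (use finA q l iA jA in auto)
      finally show "card {\<sigma>\<in>S. \<sigma> q = l} = fact (n - 2)" by (simp add: cardA numeral_2_eq_2)
    qed
    finally show ?thesis by (simp add: F2_def R_def)
  qed
  have T2: "(\<Sum>\<sigma>\<in>S. a (\<sigma> p) (\<sigma> i)) = F2 * C" if p: "p \<in> A" "p \<noteq> i" for p
  proof -
    have "(\<Sum>\<sigma>\<in>S. a (\<sigma> p) (\<sigma> i)) = (\<Sum>\<sigma>\<in>S. a (\<sigma> p) j)"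
      by (rule sum.cong) (auto simp: permS)
    also have "\<dots> = real (fact (n - 2)) * (\<Sum>l\<in>A - {j}. a l j)"
    proof (rule fiber_sum[OF finS, where g = "\<lambda>l. a l j"])
      show "finite (A - {j})" using finA by simp
      show "(\<lambda>\<sigma>. \<sigma> p) ` S \<subseteq> A - {j}" 
      proof (rule image_subsetI)
        fix \<sigma> assume s: "\<sigma> \<in> S"
        show "\<sigma> p \<in> A - {j}" using imgS[OF s p(1)] neqS[OF s p(2)] permS(2)[OF s] by auto
      qed
      fix l assume l: "l \<in> A - {j}"
      have "{\<sigma>\<in>S. \<sigma> p = l} = {\<sigma>. \<sigma> permutes A \<and> map \<sigma> [i, p] = [j, l]}"
        by (auto simp: S_def)
      also have "card \<dots> = fact (card A - length [i, p])"
        by (rule card_perm_fix) (use finA p l iA jA in auto)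
      finally show "card {\<sigma>\<in>S. \<sigma> p = l} = fact (n - 2)" by (simp add: cardA numeral_2_eq_2)
    qed
    finally show ?thesis by (simp add: F2_def C_def)
  qed
  have T3: "(\<Sum>\<sigma>\<in>S. a (\<sigma> p) (\<sigma> q)) = F3 * D" if pq: "p \<in> A" "q \<in> A" "p \<noteq> i" "q \<noteq> i" "p \<noteq> q" for p q
  proof -
    have "(\<Sum>\<sigma>\<in>S. a (\<sigma> p) (\<sigma> q)) = (\<Sum>\<sigma>\<in>S. case_prod a ((\<lambda>\<sigma>. (\<sigma> p, \<sigma> q)) \<sigma>))"
      by simp
    also have "\<dots> = real (fact (n - 3)) * (\<Sum>x\<in>Sigma (A - {j}) (\<lambda>k. A - {j, k}). case_prod a x)"
    proof (rule fiber_sum[OF finS])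
      show "finite (Sigma (A - {j}) (\<lambda>k. A - {j, k}))" using finA by simp
      show "(\<lambda>\<sigma>. (\<sigma> p, \<sigma> q)) ` S \<subseteq> Sigma (A - {j}) (\<lambda>k. A - {j, k})"

      proof (rule image_subsetI)
        fix \<sigma> assume s: "\<sigma> \<in> S"
        show "(\<sigma> p, \<sigma> q) \<in> Sigma (A - {j}) (\<lambda>k. A - {j, k})"
          using imgS[OF s pq(1)] imgS[OF s pq(2)] neqS[OF s pq(3)] neqS[OF s pq(4)] neqS[OF s pq(5)] permS(2)[OF s] by auto
      qed
      fix x assume x: "x \<in> Sigma (A - {j}) (\<lambda>k. A - {j, k})"
      then obtain k l where kl: "x = (k, l)" "k \<in> A" "l \<in> A" "k \<noteq> j" "l \<noteq> j" "l \<noteq> k" by auto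
      have "{\<sigma>\<in>S. (\<sigma> p, \<sigma> q) = x} = {\<sigma>. \<sigma> permutes A \<and> map \<sigma> [i, p, q] = [j, k, l]}"
        by (auto simp: S_def kl)
      also have "card \<dots> = fact (card A - length [i, p, q])"
        by (rule card_perm_fix) (use finA pq kl iA jA in auto)
      finally show "card {\<sigma>\<in>S. (\<sigma> p, \<sigma> q) = x} = fact (n - 3)" by (simp add: cardA numeral_3_eq_3)
    qed
    also have "(\<Sum>x\<in>Sigma (A - {j}) (\<lambda>k. A - {j, k}). case_prod a x) = D"
      unfolding D_def using finA by (subst sum.Sigma) auto
    finally show ?thesis by (simp add: F3_def)
  qed
  define T where "T p q = (if p = i then F2 * R else if q = i then F2 * C else F3 * D)" for p q
  have "(\<Sum>\<sigma>\<in>S. lop_obj n a \<sigma>) = (\<Sum>p = 1..n - 1. \<Sum>q = p + 1..n. \<Sum>\<sigma>\<in>S. a (\<sigma> p) (\<sigma> q))"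
    unfolding lop_obj_def by (simp add: sum.swap[of _ S])
  also have "\<dots> = (\<Sum>p = 1..n - 1. \<Sum>q = p + 1..n. T p q)"
  proof (intro sum.cong refl)
    fix p q assume p: "p \<in> {1..n-1}" and q: "q \<in> {p+1..n}"
    then have pq: "p \<in> A" "q \<in> A" "p \<noteq> q" by (auto simp: A_def)
    show "(\<Sum>\<sigma>\<in>S. a (\<sigma> p) (\<sigma> q)) = T p q"
      using T1[of q] T2[of p] T3[of p q] pq by (auto simp: T_def)
  qed
  also have "\<dots> = (\<Sum>p = 1..n - 1. \<Sum>q = p + 1..n. F3 * D * 1 + (F2 * R - F3 * D) * (if p = i then 1 else 0)
        + (F2 * C - F3 * D) * (if q = i then 1 else 0))"
    by (intro sum.cong refl) (auto simp: T_def)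
  also have "\<dots> = F3 * D * (\<Sum>p = 1..n - 1. \<Sum>q = p + 1..n. (1::real))
      + (F2 * R - F3 * D) * (\<Sum>p = 1..n - 1. \<Sum>q = p + 1..n. (if p = i then 1 else 0::real))
      + (F2 * C - F3 * D) * (\<Sum>p = 1..n - 1. \<Sum>q = p + 1..n. (if q = i then 1 else 0::real))"
    by (simp only: sum.distrib sum_distrib_left)
  also have "\<dots> = F3 * D * (real n * (real n - 1) / 2) + (F2 * R - F3 * D) * real (n - i)
      + (F2 * C - F3 * D) * real (i - 1)"
  proof -
    have i1: "1 \<le> i" "i \<le> n" using iA by (auto simp: A_def)
    have cb: "(\<Sum>p = 1..n - 1. \<Sum>q = p + 1..n. (if p = i then 1 else 0::real)) = real (n - i)"
      by (subst count_b) (use i1 in auto)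
    show ?thesis by (simp only: count_a cb count_c[OF i1(2)])
  qed
  finally have main: "(\<Sum>\<sigma>\<in>S. lop_obj n a \<sigma>) = \<dots>" .
  have fn1: "(fact (n - 1) :: real) = real (n - 1) * F2"
  proof -
    have "n - 1 = Suc (n - 2)" using assms(1) by simp
    then show ?thesis unfolding F2_def by (simp only: fact_Suc)
  qed
  have key: "F3 * real (n - 2) * D = F2 * D"
  proof (cases "n = 2")
    case True
    have "D = 0" unfolding D_def
    proof (rule sum.neutral, rule ballI)
      fix k assume k: "k \<in> A - {j}"
      have "A - {j, k} = {}" using k jA True by (auto simp: A_def)
      then show "(\<Sum>l\<in>A - {j, k}. a k l) = 0" by (metis sum.empty)
    qed
    then show ?thesis by simp
  next
    case False
    then have "n - 2 = Suc (n - 3)" using assms(1) by simp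
    then have "F2 = real (n - 2) * F3" unfolding F2_def F3_def
      by (metis fact_Suc of_nat_fact of_nat_mult)
    then show ?thesis by simp
  qed
  have i1: "1 \<le> i" "i \<le> n" using iA by (auto simp: A_def)
  have r1: "real (n - i) = real n - real i" "real (i - 1) = real i - 1"
    "real (n - 2) = real n - 2" "real (n - 1) = real n - 1" using i1 assms(1) by auto
  have F2pos: "F2 > 0" by (simp add: F2_def)
  have npos: "real n - 1 > 0" using assms(1) by simp
  have eq: "{\<sigma>. \<sigma> permutes {1..n} \<and> \<sigma> i = j} = S" by (simp add: S_def A_def)
  have "(1 / fact (n - 1)) * (\<Sum>\<sigma>\<in>S. lop_obj n a \<sigma>)
      = (real i - 1) / (real n - 1) * C + (real n - real i) / (real n - 1) * R + 1 / 2 * D"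
  proof -
    have k2: "F3 * (real n - 2) * D = F2 * D" using key unfolding r1 .
    have "F3 * D * (real n * (real n - 1) / 2) + (F2 * R - F3 * D) * (real n - real i)
      + (F2 * C - F3 * D) * (real i - 1)
      = F2 * R * (real n - real i) + F2 * C * (real i - 1) + (real n - 1) / 2 * (F3 * (real n - 2) * D)"
      by (simp add: field_simps)
    also have "\<dots> = F2 * R * (real n - real i) + F2 * C * (real i - 1) + (real n - 1) / 2 * (F2 * D)"
      unfolding k2 ..
    finally have m2: "(\<Sum>\<sigma>\<in>S. lop_obj n a \<sigma>) = F2 * R * (real n - real i) + F2 * C * (real i - 1) + (real n - 1) / 2 * (F2 * D)"
      unfolding main r1 .
    show ?thesis unfolding m2 fn1 r1 using final_alg[OF npos F2pos, of R "real i" C D]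
      by simp
  qed
  then show ?thesis unfolding eq r1 by (simp add: A_def C_def R_def D_def)
qed

end
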